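(* Let $G=\langle S_k\mid K\rangle$ be a finitely generated semigroup as described in the context, $\mathcal{A}$ a finite alphabet and $X\subseteq\mathcal{A}^G$ a tree shift. For all $1\le i\le k$, $m\ge0$, $n\ge0$ and $q\ge1$: (i) $|\bar{\Delta}^{(s_i)}_n|=1+\sum_{l=1}^n\sum_{j=1}^k K^l(s_i,s_j)$; (ii) $|\bar{\Delta}^{(s_i)}_{n+q(m+1)}|=|\bar{\Delta}^{(s_i)}_n|+\sum_{l=1}^k\sum_{j=0}^{q-1}K^{n+j(m+1)+1}(s_i,s_l)\,|\bar{\Delta}^{(s_l)}_m|$; (iii) $p^{(s_i)}_{n+q(m+1)}\le p^{(s_i)}_n\prod_{l=1}^k\big(p^{(s_l)}_m\big)^{\sum_{j=0}^{q-1}K^{n+j(m+1)+1}(s_i,s_l)}$. Here $K^l(s_i,s_j)$ denotes the $(s_i,s_j)$ entry of the $l$th power of $K$.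
   Context: Let $K$ be a $k\times k$ matrix with entries in $\{0,1\}$ indexed by $S_k=\{s_1,\dots,s_k\}$, and let $G=\langle S_k\mid K\rangle$ be the semigroup generated by $S_k$ subject to the relations $s_is_j=1_G$ if and only if $K(s_i,s_j)=0$ ($1_G$ the identity). Every $g\in G$ has a unique minimal representation $g=g_1g_2\cdots g_n$ with $g_l\in S_k$ and $K(g_l,g_{l+1})=1$; its length is $|g|=n$ (with $|1_G|=0$). For $g\in G$ and $n\ge0$ the $n$-semiball at $g$ is $\bar{\Delta}^{(g)}_n=\{gh: h\in G,\ |h|\le n,\ |gh|=|g|+|h|\}$. For a finite alphabet $\mathcal{A}$, a pattern is a map $u:H\to\mathcal{A}$ with $H\subset G$ finite; $u$ is accepted by $t\in\mathcal{A}^G$ if there is $g\in G$ with $t_{gh}=u_h$ for all $h\in H$. A tree shift is a subset $X\subseteq\mathcal{A}^G$ consisting of all $t$ that accept no pattern from some fixed set $\mathcal{F}$ of patterns. $p^{(g)}_n$ denotes the number of patterns $u\in\mathcal{A}^{\bar{\Delta}^{(g)}_n}$ accepted by some $t\in X$. *)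

theory Defs
  imports Main "HOL-Library.FuncSet"
begin

text \<open>Generators s_1..s_k are encoded as the naturals 0..k-1; the (0/1) matrix K is
  a function nat => nat => nat (only the entries with indices below k matter).
  An element of G is represented by its unique minimal representation, i.e. a
  word g_1...g_n over the generators with K(g_l, g_(l+1)) = 1; the identity is [].\<close>

definition semigrp :: "nat \<Rightarrow> (nat \<Rightarrow> nat \<Rightarrow> nat) \<Rightarrow> nat list set" where
  "semigrp k K = {w. set w \<subseteq> {..<k} \<and> successively (\<lambda>a b. K a b = 1) w}"

text \<open>Product of minimal words: concatenate and cancel s_a s_b = 1 (when K a b = 0)
  at the junction as long as possible. The first argument is the reversed left word.\<close>

fun cancel :: "(nat \<Rightarrow> nat \<Rightarrow> nat) \<Rightarrow> nat list \<Rightarrow> nat list \<Rightarrow> nat list" where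
  "cancel K [] h = h"
| "cancel K ra [] = rev ra"
| "cancel K (a # ra) (b # h) =
     (if K a b = 0 then cancel K ra h else rev (a # ra) @ b # h)"

definition gmult :: "(nat \<Rightarrow> nat \<Rightarrow> nat) \<Rightarrow> nat list \<Rightarrow> nat list \<Rightarrow> nat list" where
  "gmult K g h = cancel K (rev g) h"

definition semiball :: "nat \<Rightarrow> (nat \<Rightarrow> nat \<Rightarrow> nat) \<Rightarrow> nat list \<Rightarrow> nat \<Rightarrow> nat list set" where
  "semiball k K g n = {gmult K g h | h. h \<in> semigrp k K \<and> length h \<le> n \<and>
                         length (gmult K g h) = length g + length h}"

fun matpow :: "nat \<Rightarrow> (nat \<Rightarrow> nat \<Rightarrow> nat) \<Rightarrow> nat \<Rightarrow> nat \<Rightarrow> nat \<Rightarrow> nat" where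
  "matpow k K 0 i j = (if i = j then 1 else 0)"
| "matpow k K (Suc l) i j = (\<Sum>r<k. matpow k K l i r * K r j)"

definition accepts :: "nat \<Rightarrow> (nat \<Rightarrow> nat \<Rightarrow> nat) \<Rightarrow> (nat list \<Rightarrow> 'a) \<Rightarrow> nat list set \<Rightarrow> (nat list \<Rightarrow> 'a) \<Rightarrow> bool" where
  "accepts k K t H u \<longleftrightarrow> (\<exists>g\<in>semigrp k K. \<forall>h\<in>H. t (gmult K g h) = u h)"

definition is_pattern :: "nat \<Rightarrow> (nat \<Rightarrow> nat \<Rightarrow> nat) \<Rightarrow> 'a set \<Rightarrow> nat list set \<times> (nat list \<Rightarrow> 'a) \<Rightarrow> bool" where
  "is_pattern k K A Hu \<longleftrightarrow> finite (fst Hu) \<and> fst Hu \<subseteq> semigrp k K \<and> snd Hu \<in> fst Hu \<rightarrow>\<^sub>E A"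

definition tree_shift :: "nat \<Rightarrow> (nat \<Rightarrow> nat \<Rightarrow> nat) \<Rightarrow> 'a set \<Rightarrow> (nat list \<Rightarrow> 'a) set \<Rightarrow> bool" where
  "tree_shift k K A X \<longleftrightarrow>
     (\<exists>F. (\<forall>Hu\<in>F. is_pattern k K A Hu) \<and>
          X = {t \<in> semigrp k K \<rightarrow>\<^sub>E A. \<forall>(H, u)\<in>F. \<not> accepts k K t H u})"

definition pcount :: "nat \<Rightarrow> (nat \<Rightarrow> nat \<Rightarrow> nat) \<Rightarrow> 'a set \<Rightarrow> (nat list \<Rightarrow> 'a) set \<Rightarrow> nat list \<Rightarrow> nat \<Rightarrow> nat" where
  "pcount k K A X g n = card {u \<in> semiball k K g n \<rightarrow>\<^sub>E A.
                               \<exists>t\<in>X. accepts k K t (semiball k K g n) u}"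

end

theory Submission
  imports Defs
begin

definition B :: "nat \<Rightarrow> (nat \<Rightarrow> nat \<Rightarrow> nat) \<Rightarrow> nat \<Rightarrow> nat \<Rightarrow> nat list set" where
  "B k K i n = {w \<in> semigrp k K. w \<noteq> [] \<and> hd w = i \<and> length w \<le> Suc n}"

definition P :: "nat \<Rightarrow> (nat \<Rightarrow> nat \<Rightarrow> nat) \<Rightarrow> nat \<Rightarrow> nat \<Rightarrow> nat \<Rightarrow> nat list set" where
  "P k K i p l = {w \<in> semigrp k K. length w = Suc p \<and> hd w = i \<and> last w = l}"

lemma semigrp_append:
  "xs @ ys \<in> semigrp k K \<longleftrightarrow> xs \<in> semigrp k K \<and> ys \<in> semigrp k K \<and>
     (xs = [] \<or> ys = [] \<or> K (last xs) (hd ys) = 1)"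
  unfolding semigrp_def by (auto simp: successively_append_iff)

lemma semigrp_Cons:
  "x # ys \<in> semigrp k K \<longleftrightarrow> x < k \<and> ys \<in> semigrp k K \<and> (ys = [] \<or> K x (hd ys) = 1)"
  unfolding semigrp_def by (auto simp: successively_Cons)

lemma semigrp_Nil[simp]: "[] \<in> semigrp k K"
  unfolding semigrp_def by auto

lemma semigrp_set: "w \<in> semigrp k K \<Longrightarrow> x \<in> set w \<Longrightarrow> x < k"
  unfolding semigrp_def by auto

lemma finite_B: "finite (B k K i n)"
proof -
  have "B k K i n \<subseteq> {w. set w \<subseteq> {..<k} \<and> length w \<le> Suc n}"
    unfolding B_def semigrp_def by auto
  moreover have "finite {w. set w \<subseteq> {..<k} \<and> length w \<le> Suc n}"
    by (rule finite_lists_length_le) auto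
  ultimately show ?thesis by (rule finite_subset)
qed

lemma finite_P: "finite (P k K i p l)"
proof -
  have "P k K i p l \<subseteq> B k K i p" unfolding P_def B_def by auto
  thus ?thesis using finite_B finite_subset by blast
qed

lemma cancel_nostop:
  assumes "w0 \<noteq> []" "x = [] \<or> K (last w0) (hd x) \<noteq> 0"
  shows "cancel K (rev w0 @ ra) x = rev ra @ w0 @ x"
proof -
  obtain c cs where w: "rev w0 = c # cs" using assms(1)
    by (metis Nil_is_rev_conv list.exhaust)
  have c: "c = last w0" using w by (metis last_rev list.sel(1) rev_rev_ident)
  have r: "rev (c # cs @ ra) = rev ra @ w0" using w by (metis append_Cons rev_append rev_rev_ident)
  show ?thesis
  proof (cases x)
    case Nil thus ?thesis using w r by simp
  next
    case (Cons b h)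
    have e: "rev w0 @ ra = c # (cs @ ra)" using w by simp
    have "K c b \<noteq> 0" using assms(2) c Cons by simp
    then have "cancel K (c # (cs @ ra)) (b # h) = rev (c # cs @ ra) @ b # h" by simp
    thus ?thesis using e r Cons by simp
  qed
qed

lemma cancel_assoc:
  "w0 = [] \<or> x = [] \<or> K (last w0) (hd x) \<noteq> 0 \<Longrightarrow>
   cancel K ra (w0 @ x) = cancel K (rev (cancel K ra w0)) x"
proof (induction K ra w0 rule: cancel.induct)
  case (1 K h)
  show ?case
  proof (cases "h = []")
    case True thus ?thesis by simp
  next
    case False
    thus ?thesis using cancel_nostop[of h x K "[]"] 1 by simp
  qed
next
  case (2 K a ra)
  thus ?case by simp
next
  case (3 K a ra b h)
  show ?case
  proof (cases "K a b = 0")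
    case True
    have "h = [] \<or> x = [] \<or> K (last h) (hd x) \<noteq> 0" using 3(2) by auto
    thus ?thesis using 3(1)[OF True] True by simp
  next
    case False
    have e: "rev (rev (a # ra) @ b # h) = rev (b # h) @ a # ra" by simp
    have "cancel K (rev (cancel K (a # ra) (b # h))) x = cancel K (rev (b # h) @ a # ra) x"
      using False e by simp
    also have "\<dots> = rev (a # ra) @ (b # h) @ x"
      using cancel_nostop[of "b # h" x K "a # ra"] 3(2) by simp
    finally show ?thesis using False by simp
  qed
qed

lemma gmult_assoc:
  "w0 = [] \<or> x = [] \<or> K (last w0) (hd x) \<noteq> 0 \<Longrightarrow>
   gmult K g (w0 @ x) = gmult K (gmult K g w0) x"
  unfolding gmult_def using cancel_assoc by simp

lemma cancel_closed:
  "\<forall>a<k. \<forall>b<k. K a b \<in> {0, 1} \<Longrightarrow> rev ra \<in> semigrp k K \<Longrightarrow> h \<in> semigrp k K \<Longrightarrow> cancel K ra h \<in> semigrp k K"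
proof (induction K ra h rule: cancel.induct)
  case (1 K h) thus ?case by simp
next
  case (2 K a ra) thus ?case by simp
next
  case (3 K' a ra b h)
  note K01 = 3(2)
  have ra: "rev ra \<in> semigrp k K'" and a: "a < k" using 3(3) by (auto simp: semigrp_append semigrp_Cons)
  have h: "h \<in> semigrp k K'" and b: "b < k" and bh: "h = [] \<or> K' b (hd h) = 1"
    using 3(4) by (auto simp: semigrp_Cons)
  show ?case
  proof (cases "K' a b = 0")
    case True thus ?thesis using 3(1) K01 ra h by simp
  next
    case False
    have "K' a b \<in> {0,1}" using K01 a b by blast
    then have "K' a b = 1" using False by auto
    thus ?thesis using False 3(3,4) a by (simp add: semigrp_append semigrp_Cons)
  qed
qed


lemma gmult_single: "gmult K [i] [] = [i]"
  "gmult K [i] (b # h) = (if K i b = 0 then h else i # b # h)"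
  unfolding gmult_def by simp_all

lemma semiball_eq:
  assumes K01: "\<forall>a<k. \<forall>b<k. K a b \<in> {0, 1}" and i: "i < k"
  shows "semiball k K [i] n = B k K i n"
proof
  show "semiball k K [i] n \<subseteq> B k K i n"
  proof
    fix w assume "w \<in> semiball k K [i] n"
    then obtain h where h: "h \<in> semigrp k K" "length h \<le> n"
      "length (gmult K [i] h) = 1 + length h" "w = gmult K [i] h"
      unfolding semiball_def by auto
    show "w \<in> B k K i n"
    proof (cases h)
      case Nil thus ?thesis using h i by (simp add: B_def gmult_single semigrp_Cons)
    next
      case (Cons b h')
      have b: "b < k" using h(1) Cons by (simp add: semigrp_Cons)
      have "K i b \<noteq> 0" using h(3) Cons by (auto simp: gmult_single split: if_splits)
      moreover have "K i b \<in> {0,1}" using K01 i b by blast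
      ultimately have "K i b = 1" by auto
      thus ?thesis using h Cons i by (simp add: B_def gmult_single semigrp_Cons)
    qed
  qed
next
  show "B k K i n \<subseteq> semiball k K [i] n"
  proof
    fix w assume w: "w \<in> B k K i n"
    then obtain h where wh: "w = i # h" unfolding B_def by (cases w) auto
    have h: "h \<in> semigrp k K" "length h \<le> n" "h = [] \<or> K i (hd h) = 1"
      using w wh by (auto simp: B_def semigrp_Cons)
    have g: "gmult K [i] h = i # h"
      using h(3) by (cases h) (auto simp: gmult_single)
    show "w \<in> semiball k K [i] n" unfolding semiball_def
      using h g wh by (intro CollectI exI[of _ h]) auto
  qed
qed

lemma P0: "i < k \<Longrightarrow> P k K i 0 l = (if i = l then {[i]} else {})"
  unfolding P_def by (auto simp: length_Suc_conv semigrp_Cons)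

lemma P_Suc:
  assumes l: "l < k"
  shows "P k K i (Suc p) l = (\<Union>r<k. if K r l = 1 then (\<lambda>w. w @ [l]) ` P k K i p r else {})"
proof
  show "P k K i (Suc p) l \<subseteq> (\<Union>r<k. if K r l = 1 then (\<lambda>w. w @ [l]) ` P k K i p r else {})"
  proof
    fix w assume w: "w \<in> P k K i (Suc p) l"
    define w' where "w' = butlast w"
    have wne: "w \<noteq> []" using w unfolding P_def by auto
    have ww: "w = w' @ [l]" using w wne unfolding P_def w'_def by (metis (mono_tags, lifting) append_butlast_last_id mem_Collect_eq)
    have w'ne: "w' \<noteq> []" using w ww unfolding P_def by auto
    have sg: "w' \<in> semigrp k K" "K (last w') l = 1" using w ww w'ne unfolding P_def
      by (auto simp: semigrp_append)
    have r: "last w' < k" using sg(1) w'ne semigrp_set last_in_set by blast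
    have "w' \<in> P k K i p (last w')" using w ww w'ne sg unfolding P_def by auto
    thus "w \<in> (\<Union>r<k. if K r l = 1 then (\<lambda>w. w @ [l]) ` P k K i p r else {})"
      using ww sg r by force
  qed
next
  show "(\<Union>r<k. if K r l = 1 then (\<lambda>w. w @ [l]) ` P k K i p r else {}) \<subseteq> P k K i (Suc p) l"
  proof
    fix w assume "w \<in> (\<Union>r<k. if K r l = 1 then (\<lambda>w. w @ [l]) ` P k K i p r else {})"
    then obtain r w' where r: "r < k" "K r l = 1" "w' \<in> P k K i p r" "w = w' @ [l]"
      by (auto split: if_splits)
    have "w' \<noteq> []" using r(3) unfolding P_def by auto
    thus "w \<in> P k K i (Suc p) l" using r l unfolding P_def
      by (auto simp: semigrp_append semigrp_Cons)
  qed
qed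

lemma card_P:
  assumes K01: "\<forall>a<k. \<forall>b<k. K a b \<in> {0, 1}" and i: "i < k"
  shows "l < k \<Longrightarrow> card (P k K i p l) = matpow k K p i l"
proof (induction p arbitrary: l)
  case 0 thus ?case using i by (simp add: P0)
next
  case (Suc p)
  have "card (P k K i (Suc p) l) =
      card (\<Union>r<k. if K r l = 1 then (\<lambda>w. w @ [l]) ` P k K i p r else {})"
    using P_Suc[OF Suc.prems] by simp
  also have "\<dots> = (\<Sum>r<k. card (if K r l = 1 then (\<lambda>w. w @ [l]) ` P k K i p r else {}))"
  proof (rule card_UN_disjoint)
    show "finite {..<k}" by simp
    show "\<forall>r\<in>{..<k}. finite (if K r l = 1 then (\<lambda>w. w @ [l]) ` P k K i p r else {})"
      using finite_P by auto
    show "\<forall>r\<in>{..<k}. \<forall>j\<in>{..<k}. r \<noteq> j \<longrightarrow>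
      (if K r l = 1 then (\<lambda>w. w @ [l]) ` P k K i p r else {}) \<inter>
      (if K j l = 1 then (\<lambda>w. w @ [l]) ` P k K i p j else {}) = {}"
      unfolding P_def by auto
  qed
  also have "\<dots> = (\<Sum>r<k. matpow k K p i r * K r l)"
  proof (rule sum.cong)
    fix r assume r: "r \<in> {..<k}"
    have c: "card ((\<lambda>w. w @ [l]) ` P k K i p r) = card (P k K i p r)"
      by (rule card_image) (auto simp: inj_on_def)
    have "K r l \<in> {0,1}" using K01 r Suc.prems by blast
    thus "card (if K r l = 1 then (\<lambda>w. w @ [l]) ` P k K i p r else {}) = matpow k K p i r * K r l"
      using c Suc.IH r by auto
  qed simp
  finally show ?case by simp
qed


lemma B_as_P: "B k K i n = (\<Union>s\<in>{0..n}. \<Union>j<k. P k K i s j)"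
proof
  show "B k K i n \<subseteq> (\<Union>s\<in>{0..n}. \<Union>j<k. P k K i s j)"
  proof
    fix w assume w: "w \<in> B k K i n"
    then have "w \<noteq> []" "w \<in> semigrp k K" unfolding B_def by auto
    then have "last w < k" using semigrp_set last_in_set by blast
    moreover have "w \<in> P k K i (length w - 1) (last w)" "length w - 1 \<in> {0..n}"
      using w unfolding B_def P_def by auto
    ultimately show "w \<in> (\<Union>s\<in>{0..n}. \<Union>j<k. P k K i s j)" by blast
  qed
next
  show "(\<Union>s\<in>{0..n}. \<Union>j<k. P k K i s j) \<subseteq> B k K i n"
    unfolding B_def P_def by auto
qed

lemma card_B:
  assumes K01: "\<forall>a<k. \<forall>b<k. K a b \<in> {0, 1}" and i: "i < k"
  shows "card (B k K i n) = (\<Sum>s=0..n. \<Sum>j<k. matpow k K s i j)"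
proof -
  have "card (B k K i n) = (\<Sum>s=0..n. card (\<Union>j<k. P k K i s j))"
    unfolding B_as_P
  proof (rule card_UN_disjoint)
    show "\<forall>s\<in>{0..n}. finite (\<Union>j<k. P k K i s j)" using finite_P by blast
    show "\<forall>s\<in>{0..n}. \<forall>t\<in>{0..n}. s \<noteq> t \<longrightarrow> (\<Union>j<k. P k K i s j) \<inter> (\<Union>j<k. P k K i t j) = {}"
      unfolding P_def by auto
  qed simp
  also have "\<dots> = (\<Sum>s=0..n. \<Sum>j<k. card (P k K i s j))"
  proof (rule sum.cong)
    fix s assume "s \<in> {0..n}"
    show "card (\<Union>j<k. P k K i s j) = (\<Sum>j<k. card (P k K i s j))"
    proof (rule card_UN_disjoint)
      show "\<forall>j\<in>{..<k}. finite (P k K i s j)" using finite_P by blast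
      show "\<forall>j\<in>{..<k}. \<forall>t\<in>{..<k}. j \<noteq> t \<longrightarrow> P k K i s j \<inter> P k K i s t = {}"
        unfolding P_def by auto
    qed simp
  qed simp
  also have "\<dots> = (\<Sum>s=0..n. \<Sum>j<k. matpow k K s i j)"
    using card_P[OF K01 i] by simp
  finally show ?thesis .
qed

lemma part1:
  assumes K01: "\<forall>a<k. \<forall>b<k. K a b \<in> {0, 1}" and i: "i < k"
  shows "card (B k K i n) = 1 + (\<Sum>l=1..n. \<Sum>j<k. matpow k K l i j)"
proof -
  have "(\<Sum>j<k. matpow k K 0 i j) = 1" using i by (simp add: sum.delta)
  thus ?thesis using card_B[OF K01 i] by (simp add: sum.atLeast_Suc_atMost)
qed

definition E :: "nat \<Rightarrow> (nat \<Rightarrow> nat \<Rightarrow> nat) \<Rightarrow> nat \<Rightarrow> nat \<Rightarrow> nat \<Rightarrow> nat list set" where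
  "E k K i N m = (\<Union>l<k. \<Union>y\<in>P k K i (Suc N) l. (\<lambda>x. butlast y @ x) ` B k K l m)"

lemma E_elem:
  assumes "y \<in> P k K i (Suc N) l" "x \<in> B k K l m"
  shows "take (Suc N) (butlast y @ x) = butlast y" "(butlast y @ x) ! Suc N = l"
    "length (butlast y @ x) > Suc N"
proof -
  have ly: "length (butlast y) = Suc N" using assms(1) unfolding P_def by auto
  have x: "x \<noteq> []" "hd x = l" using assms(2) unfolding B_def by auto
  show "take (Suc N) (butlast y @ x) = butlast y" using ly by simp
  show "(butlast y @ x) ! Suc N = l" using ly x by (simp add: nth_append hd_conv_nth)
  show "length (butlast y @ x) > Suc N" using ly x by simp
qed

lemma P_eq:
  assumes "y \<in> P k K i p l" "y' \<in> P k K i p l" "butlast y = butlast y'"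
  shows "y = y'"
proof -
  have "y \<noteq> []" "y' \<noteq> []" "last y = l" "last y' = l" using assms unfolding P_def by auto
  thus ?thesis using assms(3) by (metis append_butlast_last_id)
qed

lemma B_split:
  assumes K01: "\<forall>a<k. \<forall>b<k. K a b \<in> {0, 1}"
  shows "B k K i (N + Suc m) = B k K i N \<union> E k K i N m" "B k K i N \<inter> E k K i N m = {}"
proof -
  show "B k K i N \<inter> E k K i N m = {}"
    unfolding E_def using E_elem(3) unfolding B_def by fastforce
  show "B k K i (N + Suc m) = B k K i N \<union> E k K i N m"
  proof
    show "B k K i (N + Suc m) \<subseteq> B k K i N \<union> E k K i N m"
    proof
      fix w assume w: "w \<in> B k K i (N + Suc m)"
      show "w \<in> B k K i N \<union> E k K i N m"
      proof (cases "length w \<le> Suc N")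
        case True thus ?thesis using w unfolding B_def by auto
      next
        case False
        define l where "l = w ! Suc N"
        define y where "y = take (Suc (Suc N)) w"
        define x where "x = drop (Suc N) w"
        have wsg: "w \<in> semigrp k K" "w \<noteq> []" "hd w = i" "length w \<le> Suc (N + Suc m)"
          using w unfolding B_def by auto
        have y1: "y = take (Suc N) w @ [l]" unfolding y_def l_def using False
          by (simp add: take_Suc_conv_app_nth)
        have bt: "butlast y = take (Suc N) w" using y1 by simp
        have wx: "w = butlast y @ x" unfolding bt x_def by simp
        have ysg: "y \<in> semigrp k K" using wsg(1) semigrp_append[of y "drop (Suc (Suc N)) w"]
          unfolding y_def by simp
        have xsg: "x \<in> semigrp k K" using wsg(1) semigrp_append[of "take (Suc N) w" x]
          unfolding x_def by simp
        have lk: "l < k" using wsg(1) False semigrp_set unfolding l_def by (meson not_le nth_mem)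
        have yP: "y \<in> P k K i (Suc N) l" unfolding P_def using y1 False wsg ysg
          by (simp add: y_def)
        have xB: "x \<in> B k K l m" unfolding B_def using xsg False wsg
          by (auto simp: x_def l_def hd_drop_conv_nth)
        have "w \<in> E k K i N m" unfolding E_def using lk yP xB wx by blast
        thus ?thesis by simp
      qed
    qed
  next
    have "B k K i N \<subseteq> B k K i (N + Suc m)" unfolding B_def by auto
    moreover have "E k K i N m \<subseteq> B k K i (N + Suc m)"
    proof
      fix z assume "z \<in> E k K i N m"
      then obtain l y x where lyx: "l < k" "y \<in> P k K i (Suc N) l" "x \<in> B k K l m" "z = butlast y @ x"
        unfolding E_def by blast
      have y: "y \<in> semigrp k K" "length y = Suc (Suc N)" "hd y = i" "last y = l"
        using lyx(2) unfolding P_def by auto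
      have x: "x \<in> semigrp k K" "x \<noteq> []" "hd x = l" "length x \<le> Suc m"
        using lyx(3) unfolding B_def by auto
      have yy: "y = butlast y @ [l]" using y by (metis append_butlast_last_id list.size(3) nat.distinct(1))
      have bne: "butlast y \<noteq> []" using y by (metis length_butlast diff_Suc_1 list.size(3) nat.distinct(1))
      have bsg: "butlast y \<in> semigrp k K" "K (last (butlast y)) l = 1"
        using y(1) yy bne semigrp_append[of "butlast y" "[l]"] by auto
      have "z \<in> semigrp k K" using lyx(4) bsg x semigrp_append by auto
      moreover have "hd z = i" using lyx(4) bne y(3) yy by (metis hd_append2)
      moreover have "length z \<le> Suc (N + Suc m)" using lyx(4) x(4) y(2) by simp
      ultimately show "z \<in> B k K i (N + Suc m)" unfolding B_def using lyx(4) bne by simp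
    qed
    ultimately show "B k K i N \<union> E k K i N m \<subseteq> B k K i (N + Suc m)" by blast
  qed
qed

lemma finite_E: "finite (E k K i N m)"
  unfolding E_def using finite_P finite_B by blast

lemma card_E:
  assumes K01: "\<forall>a<k. \<forall>b<k. K a b \<in> {0, 1}" and i: "i < k"
  shows "card (E k K i N m) = (\<Sum>l<k. matpow k K (Suc N) i l * card (B k K l m))"
proof -
  have "card (E k K i N m) = (\<Sum>l<k. card (\<Union>y\<in>P k K i (Suc N) l. (\<lambda>x. butlast y @ x) ` B k K l m))"
    unfolding E_def
  proof (rule card_UN_disjoint)
    show "\<forall>l\<in>{..<k}. finite (\<Union>y\<in>P k K i (Suc N) l. (\<lambda>x. butlast y @ x) ` B k K l m)"
      using finite_P finite_B by blast
    show "\<forall>l\<in>{..<k}. \<forall>j\<in>{..<k}. l \<noteq> j \<longrightarrow>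
      (\<Union>y\<in>P k K i (Suc N) l. (\<lambda>x. butlast y @ x) ` B k K l m) \<inter>
      (\<Union>y\<in>P k K i (Suc N) j. (\<lambda>x. butlast y @ x) ` B k K j m) = {}"
    proof (intro ballI impI)
      fix l j :: nat assume "l \<noteq> j"
      show "(\<Union>y\<in>P k K i (Suc N) l. (\<lambda>x. butlast y @ x) ` B k K l m) \<inter>
        (\<Union>y\<in>P k K i (Suc N) j. (\<lambda>x. butlast y @ x) ` B k K j m) = {}"
      proof (rule ccontr)
        assume "\<not> ?thesis"
        then obtain y x y' x' where "y \<in> P k K i (Suc N) l" "x \<in> B k K l m"
          "y' \<in> P k K i (Suc N) j" "x' \<in> B k K j m" and eq: "butlast y @ x = butlast y' @ x'"
          by blast
        then have "(butlast y @ x) ! Suc N = l" "(butlast y' @ x') ! Suc N = j"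
          using E_elem(2) by blast+
        thus False using eq \<open>l \<noteq> j\<close> by simp
      qed
    qed
  qed simp
  also have "\<dots> = (\<Sum>l<k. \<Sum>y\<in>P k K i (Suc N) l. card ((\<lambda>x. butlast y @ x) ` B k K l m))"
  proof (rule sum.cong)
    fix l assume "l \<in> {..<k}"
    show "card (\<Union>y\<in>P k K i (Suc N) l. (\<lambda>x. butlast y @ x) ` B k K l m) =
       (\<Sum>y\<in>P k K i (Suc N) l. card ((\<lambda>x. butlast y @ x) ` B k K l m))"
    proof (rule card_UN_disjoint)
      show "\<forall>y\<in>P k K i (Suc N) l. \<forall>y'\<in>P k K i (Suc N) l. y \<noteq> y' \<longrightarrow>
        (\<lambda>x. butlast y @ x) ` B k K l m \<inter> (\<lambda>x. butlast y' @ x) ` B k K l m = {}"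
      proof (intro ballI impI)
        fix y y' assume yy: "y \<in> P k K i (Suc N) l" "y' \<in> P k K i (Suc N) l" "y \<noteq> y'"
        show "(\<lambda>x. butlast y @ x) ` B k K l m \<inter> (\<lambda>x. butlast y' @ x) ` B k K l m = {}"
        proof (rule ccontr)
          assume "\<not> ?thesis"
          then obtain x x' where xx: "x \<in> B k K l m" "x' \<in> B k K l m" and eq: "butlast y @ x = butlast y' @ x'"
            by blast
          have "take (Suc N) (butlast y @ x) = butlast y" "take (Suc N) (butlast y' @ x') = butlast y'"
            using E_elem(1) yy xx by blast+
          then have "butlast y = butlast y'" using eq by simp
          thus False using P_eq yy by blast
        qed
      qed
    qed (use finite_P finite_B in auto)
  qed simp
  also have "\<dots> = (\<Sum>l<k. \<Sum>y\<in>P k K i (Suc N) l. card (B k K l m))"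
    by (intro sum.cong refl card_image) (auto simp: inj_on_def)
  also have "\<dots> = (\<Sum>l<k. matpow k K (Suc N) i l * card (B k K l m))"
    using card_P[OF K01 i] by simp
  finally show ?thesis .
qed

lemma card_B_step:
  assumes K01: "\<forall>a<k. \<forall>b<k. K a b \<in> {0, 1}" and i: "i < k"
  shows "card (B k K i (N + Suc m)) = card (B k K i N) + (\<Sum>l<k. matpow k K (Suc N) i l * card (B k K l m))"
  using B_split[OF K01, of i N m] card_E[OF K01 i, of N m] finite_E finite_B
  by (simp add: card_Un_disjoint)


lemma part2:
  assumes K01: "\<forall>a<k. \<forall>b<k. K a b \<in> {0, 1}" and i: "i < k"
  shows "card (B k K i (n + q * (m + 1))) = card (B k K i n) +
           (\<Sum>l<k. \<Sum>j<q. matpow k K (n + j * (m + 1) + 1) i l * card (B k K l m))"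
proof (induction q)
  case 0 thus ?case by simp
next
  case (Suc q)
  have e: "n + Suc q * (m + 1) = (n + q * (m + 1)) + Suc m" by simp
  show ?case unfolding e card_B_step[OF K01 i] Suc.IH
    by (simp add: sum.distrib algebra_simps)
qed

definition U :: "nat \<Rightarrow> (nat \<Rightarrow> nat \<Rightarrow> nat) \<Rightarrow> 'a set \<Rightarrow> (nat list \<Rightarrow> 'a) set \<Rightarrow> nat \<Rightarrow> nat \<Rightarrow> (nat list \<Rightarrow> 'a) set" where
  "U k K A X l m = {u \<in> B k K l m \<rightarrow>\<^sub>E A. \<exists>t\<in>X. accepts k K t (B k K l m) u}"

lemma pcount_eq:
  assumes K01: "\<forall>a<k. \<forall>b<k. K a b \<in> {0, 1}" and i: "l < k"
  shows "pcount k K A X [l] m = card (U k K A X l m)"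
  unfolding pcount_def U_def semiball_eq[OF K01 i] ..

lemma finite_U: "finite A \<Longrightarrow> finite (U k K A X l m)"
proof -
  assume "finite A"
  then have "finite (B k K l m \<rightarrow>\<^sub>E A)" using finite_B by (intro finite_PiE) auto
  thus ?thesis unfolding U_def by (rule rev_finite_subset) auto
qed

lemma P_butlast:
  assumes "y \<in> P k K i (Suc N) l"
  shows "butlast y \<noteq> []" "butlast y \<in> semigrp k K" "K (last (butlast y)) l = 1" "last y = l"
proof -
  have y: "y \<in> semigrp k K" "length y = Suc (Suc N)" "last y = l"
    using assms unfolding P_def by auto
  have yy: "y = butlast y @ [l]" using y by (metis append_butlast_last_id list.size(3) nat.distinct(1))
  show bne: "butlast y \<noteq> []" using y by (metis length_butlast diff_Suc_1 list.size(3) nat.distinct(1))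
  show "butlast y \<in> semigrp k K" "K (last (butlast y)) l = 1"
    using y(1) yy bne semigrp_append[of "butlast y" "[l]"] by auto
  show "last y = l" by fact
qed

lemma pstep:
  fixes A :: "'a set"
  assumes K01: "\<forall>a<k. \<forall>b<k. K a b \<in> {0, 1}" and i: "i < k" and finA: "finite A"
  shows "card (U k K A X i (N + Suc m)) \<le>
    card (U k K A X i N) * (\<Prod>l<k. card (U k K A X l m) ^ matpow k K (Suc N) i l)"
proof -
  define Y where "Y = (\<Union>l<k. P k K i (Suc N) l)"
  define \<Phi> where "\<Phi> = (\<lambda>u :: nat list \<Rightarrow> 'a. (restrict u (B k K i N),
     \<lambda>y\<in>Y. restrict (\<lambda>x. u (butlast y @ x)) (B k K (last y) m)))"
  define T where "T = U k K A X i N \<times> (PiE Y (\<lambda>y. U k K A X (last y) m))"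
  have finY: "finite Y" unfolding Y_def using finite_P by blast
  have Ysub: "\<And>y. y \<in> Y \<Longrightarrow> \<exists>l<k. y \<in> P k K i (Suc N) l" unfolding Y_def by blast
  have Esub: "\<And>y x. y \<in> Y \<Longrightarrow> x \<in> B k K (last y) m \<Longrightarrow> butlast y @ x \<in> B k K i (N + Suc m)"
  proof -
    fix y x assume "y \<in> Y" "x \<in> B k K (last y) m"
    then obtain l where "l < k" "y \<in> P k K i (Suc N) l" "x \<in> B k K l m"
      using Ysub P_butlast(4) by metis
    then have "butlast y @ x \<in> E k K i N m" unfolding E_def by blast
    thus "butlast y @ x \<in> B k K i (N + Suc m)" using B_split(1)[OF K01, of i N m] by blast
  qed
  have BN: "B k K i N \<subseteq> B k K i (N + Suc m)" unfolding B_def by auto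
  have maps: "\<Phi> ` U k K A X i (N + Suc m) \<subseteq> T"
  proof
    fix z assume "z \<in> \<Phi> ` U k K A X i (N + Suc m)"
    then obtain u where u: "u \<in> U k K A X i (N + Suc m)" "z = \<Phi> u" by blast
    have uA: "u \<in> B k K i (N + Suc m) \<rightarrow>\<^sub>E A" using u unfolding U_def by blast
    obtain t g where tg: "t \<in> X" "g \<in> semigrp k K"
      "\<forall>h\<in>B k K i (N + Suc m). t (gmult K g h) = u h"
      using u unfolding U_def accepts_def by blast
    have "restrict u (B k K i N) \<in> U k K A X i N"
      unfolding U_def accepts_def
    proof (intro CollectI conjI bexI[of _ t] bexI[of _ g] ballI)
      show "restrict u (B k K i N) \<in> B k K i N \<rightarrow>\<^sub>E A" using uA BN by (auto simp: PiE_iff)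
      fix h assume "h \<in> B k K i N"
      thus "t (gmult K g h) = restrict u (B k K i N) h" using tg(3) BN by auto
    qed (use tg in auto)
    moreover have "(\<lambda>y\<in>Y. restrict (\<lambda>x. u (butlast y @ x)) (B k K (last y) m))
        \<in> PiE Y (\<lambda>y. U k K A X (last y) m)"
    proof (rule PiE_I)
      fix y assume yY: "y \<in> Y"
      then obtain l where l: "l < k" "y \<in> P k K i (Suc N) l" using Ysub by blast
      have ly: "last y = l" using P_butlast(4)[OF l(2)] .
      have g': "gmult K g (butlast y) \<in> semigrp k K"
        unfolding gmult_def using cancel_closed[OF K01] tg(2) P_butlast(2)[OF l(2)] by simp
      have "restrict (\<lambda>x. u (butlast y @ x)) (B k K l m) \<in> U k K A X l m"
        unfolding U_def accepts_def
      proof (intro CollectI conjI bexI[of _ t] bexI[of _ "gmult K g (butlast y)"] ballI)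
        show "restrict (\<lambda>x. u (butlast y @ x)) (B k K l m) \<in> B k K l m \<rightarrow>\<^sub>E A"
          using Esub[OF yY] uA ly by (auto simp: PiE_iff)
        fix x assume x: "x \<in> B k K l m"
        have hx: "x \<noteq> []" "hd x = l" using x unfolding B_def by auto
        have "gmult K (gmult K g (butlast y)) x = gmult K g (butlast y @ x)"
          using gmult_assoc P_butlast(3)[OF l(2)] hx by simp
        thus "t (gmult K (gmult K g (butlast y)) x) = restrict (\<lambda>x. u (butlast y @ x)) (B k K l m) x"
          using tg(3) Esub[OF yY] x ly by simp
      qed (use tg g' in auto)
      thus "(\<lambda>y\<in>Y. restrict (\<lambda>x. u (butlast y @ x)) (B k K (last y) m)) y \<in> U k K A X (last y) m"
        using yY ly by simp
    qed auto
    ultimately show "z \<in> T" unfolding T_def u(2) \<Phi>_def by simp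
  qed
  have inj: "inj_on \<Phi> (U k K A X i (N + Suc m))"
  proof (rule inj_onI)
    fix u u' assume uu: "u \<in> U k K A X i (N + Suc m)" "u' \<in> U k K A X i (N + Suc m)" "\<Phi> u = \<Phi> u'"
    have uA: "u \<in> B k K i (N + Suc m) \<rightarrow>\<^sub>E A" "u' \<in> B k K i (N + Suc m) \<rightarrow>\<^sub>E A"
      using uu unfolding U_def by blast+
    have "fst (\<Phi> u) = fst (\<Phi> u')" using uu(3) by (rule arg_cong)
    then have r1: "restrict u (B k K i N) = restrict u' (B k K i N)" unfolding \<Phi>_def by (simp only: fst_conv)
    have s2: "snd (\<Phi> u) = snd (\<Phi> u')" using uu(3) by (rule arg_cong)
    have r2: "restrict (\<lambda>x. u (butlast y @ x)) (B k K (last y) m) =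
       restrict (\<lambda>x. u' (butlast y @ x)) (B k K (last y) m)" if yY: "y \<in> Y" for y
    proof -
      have "snd (\<Phi> u) y = snd (\<Phi> u') y" using s2 by (rule fun_cong)
      thus ?thesis unfolding \<Phi>_def snd_conv restrict_apply' [OF yY] .
    qed
    show "u = u'"
    proof
      fix w
      show "u w = u' w"
      proof (cases "w \<in> B k K i (N + Suc m)")
        case False
        have "u w = undefined" by (rule PiE_arb[OF uA(1) False])
        moreover have "u' w = undefined" by (rule PiE_arb[OF uA(2) False])
        ultimately show ?thesis by simp
      next
        case True
        then have "w \<in> B k K i N \<or> w \<in> E k K i N m" using B_split(1)[OF K01, of i N m] by blast
        thus ?thesis
        proof
          assume "w \<in> B k K i N"
          moreover have "restrict u (B k K i N) w = restrict u' (B k K i N) w" using r1 by (rule fun_cong)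
          ultimately show ?thesis by simp
        next
          assume "w \<in> E k K i N m"
          then obtain l y x where lyx: "l < k" "y \<in> P k K i (Suc N) l" "x \<in> B k K l m" "w = butlast y @ x"
            unfolding E_def by blast
          have yY: "y \<in> Y" unfolding Y_def using lyx by blast
          have "last y = l" using P_butlast(4)[OF lyx(2)] .
          have "restrict (\<lambda>x. u (butlast y @ x)) (B k K (last y) m) x =
                restrict (\<lambda>x. u' (butlast y @ x)) (B k K (last y) m) x" using r2[OF yY] by (rule fun_cong)
          then have "restrict (\<lambda>x. u (butlast y @ x)) (B k K l m) x =
                restrict (\<lambda>x. u' (butlast y @ x)) (B k K l m) x" using \<open>last y = l\<close> by simp
          thus ?thesis using lyx(3,4) by simp
        qed
      qed
    qed
  qed
  have finT: "finite T" unfolding T_def using finite_U[OF finA] finY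
    by (intro finite_cartesian_product finite_PiE) auto
  have "card (U k K A X i (N + Suc m)) \<le> card T"
    using card_inj_on_le[OF inj maps finT] .
  also have "card T = card (U k K A X i N) * (\<Prod>y\<in>Y. card (U k K A X (last y) m))"
    unfolding T_def using finY by (simp add: card_cartesian_product card_PiE)
  also have "(\<Prod>y\<in>Y. card (U k K A X (last y) m)) =
      (\<Prod>l<k. \<Prod>y\<in>P k K i (Suc N) l. card (U k K A X (last y) m))"
    unfolding Y_def
  proof (rule prod.UNION_disjoint)
    show "\<forall>l\<in>{..<k}. \<forall>j\<in>{..<k}. l \<noteq> j \<longrightarrow> P k K i (Suc N) l \<inter> P k K i (Suc N) j = {}"
      unfolding P_def by auto
  qed (use finite_P in auto)
  also have "\<dots> = (\<Prod>l<k. card (U k K A X l m) ^ matpow k K (Suc N) i l)"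
  proof (rule prod.cong)
    fix l assume l: "l \<in> {..<k}"
    have "(\<Prod>y\<in>P k K i (Suc N) l. card (U k K A X (last y) m)) =
          (\<Prod>y\<in>P k K i (Suc N) l. card (U k K A X l m))"
      by (rule prod.cong) (auto simp: P_def)
    also have "\<dots> = card (U k K A X l m) ^ card (P k K i (Suc N) l)" by simp
    finally show "(\<Prod>y\<in>P k K i (Suc N) l. card (U k K A X (last y) m)) =
        card (U k K A X l m) ^ matpow k K (Suc N) i l"
      using card_P[OF K01 i] l by simp
  qed simp
  finally show ?thesis by simp
qed

lemma part3:
  assumes K01: "\<forall>a<k. \<forall>b<k. K a b \<in> {0, 1}" and i: "i < k" and finA: "finite A"
  shows "card (U k K A X i (n + q * (m + 1))) \<le> card (U k K A X i n) *
           (\<Prod>l<k. card (U k K A X l m) ^ (\<Sum>j<q. matpow k K (n + j * (m + 1) + 1) i l))"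
proof (induction q)
  case 0 thus ?case by simp
next
  case (Suc q)
  have e: "n + Suc q * (m + 1) = (n + q * (m + 1)) + Suc m" by simp
  have "card (U k K A X i (n + Suc q * (m + 1))) \<le>
      card (U k K A X i (n + q * (m + 1))) *
      (\<Prod>l<k. card (U k K A X l m) ^ matpow k K (Suc (n + q * (m + 1))) i l)"
    unfolding e by (rule pstep[OF K01 i finA])
  also have "\<dots> \<le> (card (U k K A X i n) *
           (\<Prod>l<k. card (U k K A X l m) ^ (\<Sum>j<q. matpow k K (n + j * (m + 1) + 1) i l))) *
      (\<Prod>l<k. card (U k K A X l m) ^ matpow k K (Suc (n + q * (m + 1))) i l)"
    by (rule mult_right_mono[OF Suc.IH]) simp
  also have "\<dots> = card (U k K A X i n) *
           (\<Prod>l<k. card (U k K A X l m) ^ (\<Sum>j<Suc q. matpow k K (n + j * (m + 1) + 1) i l))"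
    by (simp add: power_add prod.distrib)
  finally show ?case .
qed


theorem lemma3p4:
  fixes k :: nat and K :: "nat \<Rightarrow> nat \<Rightarrow> nat" and A :: "'a set"
    and X :: "(nat list \<Rightarrow> 'a) set" and i m n q :: nat
  assumes K01: "\<forall>a<k. \<forall>b<k. K a b \<in> {0, 1}"
    and finA: "finite A"
    and TS: "tree_shift k K A X"
    and i: "i < k"
    and q: "q \<ge> 1"
  shows "card (semiball k K [i] n) = 1 + (\<Sum>l=1..n. \<Sum>j<k. matpow k K l i j) \<and>
         card (semiball k K [i] (n + q * (m + 1))) =
           card (semiball k K [i] n) +
           (\<Sum>l<k. \<Sum>j<q. matpow k K (n + j * (m + 1) + 1) i l * card (semiball k K [l] m)) \<and>
         pcount k K A X [i] (n + q * (m + 1)) \<le>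
           pcount k K A X [i] n *
           (\<Prod>l<k. (pcount k K A X [l] m) ^ (\<Sum>j<q. matpow k K (n + j * (m + 1) + 1) i l))"
proof (intro conjI)
  have sb: "\<And>l N. l < k \<Longrightarrow> semiball k K [l] N = B k K l N"
    using semiball_eq[OF K01] by blast
  have pc: "\<And>l N. l < k \<Longrightarrow> pcount k K A X [l] N = card (U k K A X l N)"
    using pcount_eq[OF K01] by blast
  show "card (semiball k K [i] n) = 1 + (\<Sum>l=1..n. \<Sum>j<k. matpow k K l i j)"
    using part1[OF K01 i] sb[OF i] by simp
  have "(\<Sum>l<k. \<Sum>j<q. matpow k K (n + j * (m + 1) + 1) i l * card (semiball k K [l] m)) =
        (\<Sum>l<k. \<Sum>j<q. matpow k K (n + j * (m + 1) + 1) i l * card (B k K l m))"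
    using sb by (intro sum.cong refl) auto
  then show "card (semiball k K [i] (n + q * (m + 1))) =
           card (semiball k K [i] n) +
           (\<Sum>l<k. \<Sum>j<q. matpow k K (n + j * (m + 1) + 1) i l * card (semiball k K [l] m))"
    using part2[OF K01 i, of n q m] sb[OF i] by simp
  have "(\<Prod>l<k. (pcount k K A X [l] m) ^ (\<Sum>j<q. matpow k K (n + j * (m + 1) + 1) i l)) =
        (\<Prod>l<k. card (U k K A X l m) ^ (\<Sum>j<q. matpow k K (n + j * (m + 1) + 1) i l))"
    using pc by (intro prod.cong refl) auto
  then show "pcount k K A X [i] (n + q * (m + 1)) \<le>
           pcount k K A X [i] n *
           (\<Prod>l<k. (pcount k K A X [l] m) ^ (\<Sum>j<q. matpow k K (n + j * (m + 1) + 1) i l))"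
    using part3[OF K01 i finA, of X n q m] pc[OF i] by simp
qed

end
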